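(* Let $G$ be a group and $A\subseteq G$ a nonempty finite set. Suppose $H$ is a finite subgroup of $G$ such that $H\subseteq\operatorname{Stab}^r_N(A)$ for some $N>0$. Then there is a set $D\subseteq G$ which is a union of left cosets of $H$ such that $|A\triangle D|\leq N$.
   Context: $\operatorname{Stab}^r_N(A)=\{x\in G:|Ax\triangle A|\leq N\}$, where $\triangle$ denotes symmetric difference. *)

theory Defs
  imports "HOL-Algebra.Coset"
begin

definition sym_diff :: "'a set \<Rightarrow> 'a set \<Rightarrow> 'a set" where
  "sym_diff X Y = (X - Y) \<union> (Y - X)"

definition stab_r :: "('a, 'b) monoid_scheme \<Rightarrow> nat \<Rightarrow> 'a set \<Rightarrow> 'a set" where
  "stab_r G N A = {x \<in> carrier G. card (sym_diff (A #>\<^bsub>G\<^esub> x) A) \<le> N}"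

end

theory Submission
  imports Defs
begin

lemma card_filter_sum: "finite X \<Longrightarrow> card {x\<in>X. P x} = (\<Sum>x\<in>X. if P x then 1 else 0 :: nat)"
  by (simp add: sum.inter_filter[symmetric])

context group
begin

lemma lc_image: "x <# H = (\<lambda>h. x \<otimes> h) ` H"
  by (auto simp: l_coset_def)

lemma rc_image: "(A #> h) = (\<lambda>z. z \<otimes> h) ` A"
  by (auto simp: r_coset_def)

lemma lc_card:
  assumes sub: "subgroup H G" and z: "z \<in> carrier G"
  shows "card (z <# H) = card H"
proof -
  have "inj_on (\<lambda>h. z \<otimes> h) H"
    using z subgroup.subset[OF sub] by (intro inj_onI) (metis Units_eq Units_l_cancel subsetD)
  then show ?thesis by (simp add: lc_image card_image)
qed

lemma lc_self: "subgroup H G \<Longrightarrow> z \<in> carrier G \<Longrightarrow> z \<in> z <# H"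
  using subgroup.one_closed[of H G] by (force simp: l_coset_def)

lemma main6p2:
  assumes sub: "subgroup H G" and fin: "finite H" and Ac: "A \<subseteq> carrier G" and finA: "finite A"
    and stab: "H \<subseteq> stab_r G N A"
  shows "\<exists>D S. S \<subseteq> carrier G \<and> D = (\<Union>x\<in>S. x <# H)
              \<and> finite (sym_diff A D) \<and> card (sym_diff A D) \<le> N"
proof -
  define k where "k = card H"
  have Hc: "H \<subseteq> carrier G" using subgroup.subset[OF sub] .
  have kpos: "k > 0" using fin subgroup.one_closed[OF sub] k_def card_gt_0_iff by auto
  define Sx where "Sx = {x\<in>carrier G. k < 2 * card ((x <# H) \<inter> A)}"
  define D where "D = (\<Union>x\<in>Sx. x <# H)"
  define U where "U = (\<Union>a\<in>A. a <# H)"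
  have finlc: "\<And>z. finite (z <# H)" using fin by (simp add: lc_image)
  have finU: "finite U" unfolding U_def using finA finlc by auto
  have DU: "D \<subseteq> U"
  proof
    fix y assume "y \<in> D"
    then obtain x where x: "x \<in> Sx" "y \<in> x <# H" unfolding D_def by auto
    then have "card ((x <# H) \<inter> A) > 0" unfolding Sx_def by auto
    then have "(x <# H) \<inter> A \<noteq> {}" by (metis card.empty less_irrefl)
    then obtain a where a: "a \<in> x <# H" "a \<in> A" by auto
    have xc: "x \<in> carrier G" using x Sx_def by auto
    have "x <# H = a <# H" using l_repr_independence[OF a(1) xc sub] .
    then show "y \<in> U" using x a U_def by auto
  qed
  have Dc: "D \<subseteq> carrier G" unfolding D_def Sx_def using l_coset_carrier[OF _ _ sub] by blast
  have finD: "finite D" using DU finU finite_subset by blast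
  have closed: "\<And>z. z \<in> D \<Longrightarrow> z <# H \<subseteq> D"
  proof -
    fix z assume "z \<in> D"
    then obtain x where x: "x \<in> Sx" "z \<in> x <# H" unfolding D_def by auto
    have xc: "x \<in> carrier G" using x Sx_def by auto
    have "x <# H = z <# H" using l_repr_independence[OF x(2) xc sub] .
    then show "z <# H \<subseteq> D" using x D_def by auto
  qed
  have notD: "\<And>z. z \<in> carrier G \<Longrightarrow> z \<notin> D \<Longrightarrow> 2 * card ((z <# H) \<inter> A) \<le> k"
  proof (rule ccontr)
    fix z assume z: "z \<in> carrier G" "z \<notin> D" "\<not> 2 * card ((z <# H) \<inter> A) \<le> k"
    then have "z \<in> Sx" unfolding Sx_def by auto
    then show False using z lc_self[OF sub z(1)] D_def by auto
  qed
  have inD: "\<And>y. y \<in> D \<Longrightarrow> k < 2 * card ((y <# H) \<inter> A)"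
  proof -
    fix y assume "y \<in> D"
    then obtain x where x: "x \<in> Sx" "y \<in> x <# H" unfolding D_def by auto
    have xc: "x \<in> carrier G" using x Sx_def by auto
    have "x <# H = y <# H" using l_repr_independence[OF x(2) xc sub] .
    then show "k < 2 * card ((y <# H) \<inter> A)" using x Sx_def by auto
  qed
  define S where "S = (\<Sum>z\<in>A. card ((z <# H) - A))"
  have symcard: "card (sym_diff (A #> h) A) = 2 * card {z\<in>A. z \<otimes> h \<notin> A}" if h: "h \<in> H" for h
  proof -
    have hc: "h \<in> carrier G" using h Hc by auto
    have inj: "inj_on (\<lambda>z. z \<otimes> h) A" using Ac hc by (intro inj_onI) (metis right_cancel subsetD)
    have c1: "card (A #> h) = card A" using inj by (simp add: rc_image card_image)
    have finAh: "finite (A #> h)" using finA by (simp add: rc_image)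
    have "card ((A #> h) - A) = card (A #> h) - card ((A #> h) \<inter> A)"
      using finAh by (simp add: card_Diff_subset_Int)
    moreover have "card (A - (A #> h)) = card A - card (A \<inter> (A #> h))"
      using finA by (simp add: card_Diff_subset_Int)
    ultimately have eq: "card ((A #> h) - A) = card (A - (A #> h))" using c1 by (simp add: Int_commute)
    have "card (sym_diff (A #> h) A) = card ((A #> h) - A) + card (A - (A #> h))"
      unfolding sym_diff_def using finA finAh by (intro card_Un_disjoint) auto
    moreover have "(A #> h) - A = (\<lambda>z. z \<otimes> h) ` {z\<in>A. z \<otimes> h \<notin> A}"
      by (auto simp: rc_image)
    moreover have "card ((\<lambda>z. z \<otimes> h) ` {z\<in>A. z \<otimes> h \<notin> A}) = card {z\<in>A. z \<otimes> h \<notin> A}"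
      using inj by (intro card_image) (auto intro: inj_on_subset)
    ultimately show ?thesis using eq by simp
  qed
  have a: "(\<Sum>h\<in>H. card (sym_diff (A #> h) A)) = 2 * S"
  proof -
    have "(\<Sum>h\<in>H. card (sym_diff (A #> h) A)) = (\<Sum>h\<in>H. 2 * card {z\<in>A. z \<otimes> h \<notin> A})"
      using symcard by (rule sum.cong[OF refl])
    also have "\<dots> = 2 * (\<Sum>h\<in>H. \<Sum>z\<in>A. if z \<otimes> h \<notin> A then 1 else 0)"
      using finA by (simp add: sum_distrib_left card_filter_sum)
    also have "\<dots> = 2 * (\<Sum>z\<in>A. \<Sum>h\<in>H. if z \<otimes> h \<notin> A then 1 else 0)"
      by (rule arg_cong[where f="\<lambda>x. 2 * x"], rule sum.swap)
    also have "\<dots> = 2 * (\<Sum>z\<in>A. card {h\<in>H. z \<otimes> h \<notin> A})"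
      using fin by (simp add: card_filter_sum)
    also have "\<dots> = 2 * S" unfolding S_def
    proof (intro arg_cong[where f="\<lambda>x. 2 * x"] sum.cong refl)
      fix z assume "z \<in> A"
      then have zc: "z \<in> carrier G" using Ac by auto
      have inj: "inj_on (\<lambda>h. z \<otimes> h) H" using zc Hc by (intro inj_onI) (metis Units_eq Units_l_cancel subsetD)
      have "(z <# H) - A = (\<lambda>h. z \<otimes> h) ` {h\<in>H. z \<otimes> h \<notin> A}" by (auto simp: lc_image)
      then show "card {h\<in>H. z \<otimes> h \<notin> A} = card ((z <# H) - A)"
        using inj by (simp add: card_image inj_on_subset)
    qed
    finally show ?thesis .
  qed
  have b: "(\<Sum>h\<in>H. card (sym_diff (A #> h) A)) \<le> k * N"
  proof -
    have "(\<Sum>h\<in>H. card (sym_diff (A #> h) A)) \<le> (\<Sum>h\<in>H. N)"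
      using stab by (intro sum_mono) (auto simp: stab_r_def)
    then show ?thesis by (simp add: k_def)
  qed
  have c: "S = (\<Sum>z\<in>A-D. card ((z <# H) - A)) + (\<Sum>z\<in>A\<inter>D. card ((z <# H) - A))"
  proof -
    have "A = (A - D) \<union> (A \<inter> D)" by auto
    then have "S = (\<Sum>z\<in>(A - D) \<union> (A \<inter> D). card ((z <# H) - A))" unfolding S_def by simp
    also have "\<dots> = (\<Sum>z\<in>A-D. card ((z <# H) - A)) + (\<Sum>z\<in>A\<inter>D. card ((z <# H) - A))"
      using finA by (intro sum.union_disjoint) auto
    finally show ?thesis .
  qed
  have d: "k * card (A - D) \<le> 2 * (\<Sum>z\<in>A-D. card ((z <# H) - A))"
  proof -
    have "card (A - D) * k \<le> (\<Sum>z\<in>A-D. 2 * card ((z <# H) - A))"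
    proof (rule sum_bounded_below[where K=k, simplified])
      fix z assume z: "z \<in> A - D"
      then have zc: "z \<in> carrier G" using Ac by auto
      have "card ((z <# H) - A) = card (z <# H) - card ((z <# H) \<inter> A)"
        using finlc by (simp add: card_Diff_subset_Int)
      moreover have "card ((z <# H) \<inter> A) \<le> card (z <# H)" using finlc by (simp add: card_mono)
      ultimately show "k \<le> 2 * card ((z <# H) - A)"
        using notD[OF zc] z lc_card[OF sub zc] k_def by auto
    qed
    then show ?thesis by (simp add: sum_distrib_left mult.commute)
  qed
  have e: "(\<Sum>z\<in>A\<inter>D. card ((z <# H) - A)) = (\<Sum>y\<in>D-A. card ((y <# H) \<inter> A))"
  proof -
    have finDA: "finite (D - A)" using finD by auto
    have finAD: "finite (A \<inter> D)" using finA by auto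
    have "(\<Sum>z\<in>A\<inter>D. card ((z <# H) - A)) = (\<Sum>z\<in>A\<inter>D. \<Sum>y\<in>D-A. if y \<in> z <# H then 1 else 0)"
    proof (rule sum.cong[OF refl])
      fix z assume z: "z \<in> A \<inter> D"
      have e1: "(z <# H) - A = {y\<in>D-A. y \<in> z <# H}" using closed[of z] z by auto
      show "card ((z <# H) - A) = (\<Sum>y\<in>D-A. if y \<in> z <# H then 1 else 0)"
        by (simp only: e1 card_filter_sum[OF finDA])
    qed
    also have "\<dots> = (\<Sum>y\<in>D-A. \<Sum>z\<in>A\<inter>D. if y \<in> z <# H then 1 else 0)"
      by (rule sum.swap)
    also have "\<dots> = (\<Sum>y\<in>D-A. \<Sum>z\<in>A\<inter>D. if z \<in> y <# H then 1 else 0)"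
    proof (intro sum.cong refl)
      fix y z assume y: "y \<in> D - A" and z: "z \<in> A \<inter> D"
      have yc: "y \<in> carrier G" using y Dc by auto
      have zc: "z \<in> carrier G" using z Ac by auto
      have "y \<in> z <# H \<longleftrightarrow> z \<in> y <# H"
        using l_coset_swap[OF _ yc sub] l_coset_swap[OF _ zc sub] by blast
      then show "(if y \<in> z <# H then 1 else 0) = (if z \<in> y <# H then 1 else (0::nat))" by simp
    qed
    also have "\<dots> = (\<Sum>y\<in>D-A. card ((y <# H) \<inter> A))"
    proof (rule sum.cong[OF refl])
      fix y assume y: "y \<in> D - A"
      have e2: "(y <# H) \<inter> A = {z\<in>A\<inter>D. z \<in> y <# H}" using closed[of y] y by auto
      show "(\<Sum>z\<in>A\<inter>D. if z \<in> y <# H then 1 else 0) = card ((y <# H) \<inter> A)"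
        by (simp only: e2 card_filter_sum[OF finAD])
    qed
    finally show ?thesis .
  qed
  have f: "k * card (D - A) \<le> 2 * (\<Sum>y\<in>D-A. card ((y <# H) \<inter> A))"
  proof -
    have "card (D - A) * k \<le> (\<Sum>y\<in>D-A. 2 * card ((y <# H) \<inter> A))"
      by (rule sum_bounded_below[where K=k, simplified]) (use inD in force)
    then show ?thesis by (simp add: sum_distrib_left mult.commute)
  qed
  have tot: "k * (card (A - D) + card (D - A)) \<le> k * N"
    using a b c d e f by (simp add: add_mult_distrib2)
  then have le: "card (A - D) + card (D - A) \<le> N" using kpos by simp
  have fs: "finite (sym_diff A D)" unfolding sym_diff_def using finA finD by auto
  have "card (sym_diff A D) = card (A - D) + card (D - A)"
    unfolding sym_diff_def using finA finD by (intro card_Un_disjoint) auto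
  then show ?thesis
    using le fs Sx_def D_def by (intro exI[of _ D] exI[of _ Sx]) auto
qed

end

theorem lemma6p2:
  fixes G :: "('a, 'b) monoid_scheme" and A H :: "'a set" and N :: nat
  assumes "group G"
    and "A \<subseteq> carrier G" and "finite A" and "A \<noteq> {}"
    and "subgroup H G" and "finite H"
    and "N > 0"
    and "H \<subseteq> stab_r G N A"
  shows "\<exists>D S. S \<subseteq> carrier G \<and> D = (\<Union>x\<in>S. x <#\<^bsub>G\<^esub> H)
              \<and> finite (sym_diff A D) \<and> card (sym_diff A D) \<le> N"
  using group.main6p2[OF assms(1) assms(5) assms(6) assms(2) assms(3) assms(8)] .

end
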